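(* Let $A\in\mathcal{C}_n$ and let $u,v$ be minimal zeros of $A$ with supports $\operatorname{Supp}(u)=I$, $\operatorname{Supp}(v)=J$. Assume that $J\setminus I=\{k\}$ consists of exactly one element. Then every zero $w$ of $A$ with $\operatorname{Supp}(w)\subset I\cup J$ can be written as $w=\alpha u+\beta v$ with $\alpha,\beta\ge 0$. In particular, up to multiplication by a positive constant, $A$ has no minimal zeros $w$ with $\operatorname{Supp}(w)\subset I\cup J$ other than $u$ and $v$.
   Context: $\mathcal{C}_n$ denotes the cone of copositive matrices: real symmetric $n\times n$ matrices $A$ with $x^TAx\ge 0$ for all $x\in\mathbb{R}^n_+$. For $A\in\mathcal{C}_n$, a zero of $A$ is a nonzero vector $u\in\mathbb{R}^n_+$ with $u^TAu=0$. The support of $u\in\mathbb{R}^n$ is $\operatorname{Supp}(u)=\{i : u_i\neq 0\}$. A zero $u$ of $A$ is minimal if there is no zero $v$ of $A$ with $\operatorname{Supp}(v)\subsetneq\operatorname{Supp}(u)$. *)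

theory Defs
  imports "HOL-Analysis.Analysis"
begin

definition nonneg_vec :: "real^'n \<Rightarrow> bool" where
  "nonneg_vec x \<longleftrightarrow> (\<forall>i. x $ i \<ge> 0)"

definition copositive :: "real^'n^'n \<Rightarrow> bool" where
  "copositive A \<longleftrightarrow> transpose A = A \<and> (\<forall>x. nonneg_vec x \<longrightarrow> x \<bullet> (A *v x) \<ge> 0)"

definition supp :: "real^'n \<Rightarrow> 'n set" where
  "supp u = {i. u $ i \<noteq> 0}"

definition is_zero :: "real^'n^'n \<Rightarrow> real^'n \<Rightarrow> bool" where
  "is_zero A u \<longleftrightarrow> u \<noteq> 0 \<and> nonneg_vec u \<and> u \<bullet> (A *v u) = 0"

definition minimal_zero :: "real^'n^'n \<Rightarrow> real^'n \<Rightarrow> bool" where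
  "minimal_zero A u \<longleftrightarrow> is_zero A u \<and> \<not> (\<exists>v. is_zero A v \<and> supp v \<subset> supp u)"

end

theory Submission
  imports Defs
begin
lemma mv_scale: "(A::real^'n^'n) *v (c *\<^sub>R x) = c *\<^sub>R (A *v x)"
  by (simp add: vec_eq_iff matrix_vector_mult_def sum_distrib_left algebra_simps)
lemma symm_b: assumes "transpose A = (A::real^'n^'n)" shows "x \<bullet> (A *v y) = y \<bullet> (A *v x)"
  by (metis assms dot_lmul_matrix transpose_matrix_vector inner_commute)
lemma q_add: assumes "transpose A = (A::real^'n^'n)"
  shows "(x+y) \<bullet> (A *v (x+y)) = x \<bullet> (A *v x) + 2*(x \<bullet> (A *v y)) + y \<bullet> (A *v y)"
  using symm_b[OF assms, of y x] by (simp add: matrix_vector_right_distrib inner_add_left inner_add_right)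
lemma q_scale: "(c *\<^sub>R x) \<bullet> ((A::real^'n^'n) *v (c *\<^sub>R x)) = c^2 * (x \<bullet> (A *v x))"
  by (simp add: mv_scale power2_eq_square)
lemma q_add_scale: assumes "transpose A = (A::real^'n^'n)"
  shows "(x + s *\<^sub>R y) \<bullet> (A *v (x + s *\<^sub>R y)) = x \<bullet> (A *v x) + 2 * s * (x \<bullet> (A *v y)) + s^2 * (y \<bullet> (A *v y))"
  using q_add[OF assms, of x "s *\<^sub>R y"] q_scale[of s y A] by (simp add: mv_scale)

lemma exists_small:
  fixes u d :: "real^'n"
  assumes "nonneg_vec u" "supp d \<subseteq> supp u"
  shows "\<exists>s>0. \<forall>i. s * \<bar>d$i\<bar> \<le> u$i"
proof -
  have "\<forall>i. \<exists>si>0. si * \<bar>d$i\<bar> \<le> u$i"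
  proof
    fix i
    show "\<exists>si>0. si * \<bar>d$i\<bar> \<le> u$i"
    proof (cases "d$i = 0")
      case True then show ?thesis using assms(1) unfolding nonneg_vec_def by (intro exI[of _ 1]) auto
    next
      case False
      then have "u$i \<noteq> 0" using assms(2) unfolding supp_def by auto
      then have "u$i > 0" using assms(1) unfolding nonneg_vec_def by (metis order_le_less)
      then show ?thesis using False by (intro exI[of _ "u$i / \<bar>d$i\<bar>"]) auto
    qed
  qed
  then obtain f where f: "\<And>i. f i > 0 \<and> f i * \<bar>d$i\<bar> \<le> u$i" by metis
  define s where "s = Min (range f)"
  have "s > 0" unfolding s_def using f by (subst Min_gr_iff) auto
  moreover have "\<forall>i. s * \<bar>d$i\<bar> \<le> u$i"
  proof
    fix i
    have "s \<le> f i" unfolding s_def by (rule Min_le) auto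
    then have "s * \<bar>d$i\<bar> \<le> f i * \<bar>d$i\<bar>" by (rule mult_right_mono) auto
    then show "s * \<bar>d$i\<bar> \<le> u$i" using f[of i] by linarith
  qed
  ultimately show ?thesis by blast
qed

lemma psd:
  fixes A :: "real^'n^'n"
  assumes "copositive A" "is_zero A u" "supp d \<subseteq> supp u"
  shows "d \<bullet> (A *v d) \<ge> 0"
proof -
  have sym: "transpose A = A" and cop: "\<And>x. nonneg_vec x \<Longrightarrow> x \<bullet> (A *v x) \<ge> 0"
    using assms(1) unfolding copositive_def by auto
  have un: "nonneg_vec u" and uq: "u \<bullet> (A *v u) = 0" using assms(2) unfolding is_zero_def by auto
  obtain s where s: "s > 0" "\<And>i. s * \<bar>d$i\<bar> \<le> u$i" using exists_small[OF un assms(3)] by blast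
  have "nonneg_vec (u + s *\<^sub>R d)" unfolding nonneg_vec_def
  proof
    fix i have "s * \<bar>d$i\<bar> \<le> u$i" by (rule s(2))
    moreover have "s * (- \<bar>d$i\<bar>) \<le> s * d$i" using s(1) by (intro mult_left_mono) auto
    ultimately show "0 \<le> (u + s *\<^sub>R d) $ i" by simp
  qed
  moreover have "nonneg_vec (u + (-s) *\<^sub>R d)" unfolding nonneg_vec_def
  proof
    fix i have "s * \<bar>d$i\<bar> \<le> u$i" by (rule s(2))
    moreover have "s * d$i \<le> s * \<bar>d$i\<bar>" using s(1) by (simp add: mult_left_mono)
    ultimately show "0 \<le> (u + (-s) *\<^sub>R d) $ i" by simp
  qed
  ultimately have "0 \<le> (u + s *\<^sub>R d) \<bullet> (A *v (u + s *\<^sub>R d)) + (u + (-s) *\<^sub>R d) \<bullet> (A *v (u + (-s) *\<^sub>R d))"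
    using cop by (simp add: add_nonneg_nonneg)
  also have "\<dots> = 2 * s^2 * (d \<bullet> (A *v d))" unfolding q_add_scale[OF sym] uq by simp
  finally show ?thesis using s(1) by (simp add: zero_le_mult_iff)
qed

lemma supp_add_sub: "supp x \<subseteq> I \<Longrightarrow> supp y \<subseteq> I \<Longrightarrow> supp (x + r *\<^sub>R y) \<subseteq> I"
  unfolding supp_def by (simp add: subset_iff) (metis add.right_neutral mult_zero_right)

lemma alg_id: "(a::real) \<ge> 0 \<Longrightarrow> r = - b / (a+1) \<Longrightarrow> (2 * r * b + r ^ 2 * a) * (a + 1) ^ 2 = - (b ^ 2 * (a + 2))"
  by (simp add: power2_eq_square field_simps) algebra

lemma psd_kernel:
  fixes A :: "real^'n^'n"
  assumes "copositive A" "is_zero A u" "supp d \<subseteq> supp u" "supp y \<subseteq> supp u"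
    and "d \<bullet> (A *v d) = 0"
  shows "d \<bullet> (A *v y) = 0"
proof (rule ccontr)
  have sym: "transpose A = A" using assms(1) unfolding copositive_def by auto
  define b where "b = d \<bullet> (A *v y)"
  define a where "a = y \<bullet> (A *v y)"
  assume "d \<bullet> (A *v y) \<noteq> 0"
  then have b0: "b \<noteq> 0" by (simp add: b_def)
  have a0: "a \<ge> 0" unfolding a_def by (rule psd[OF assms(1,2,4)])
  define r where "r = - b / (a+1)"
  have "0 \<le> (d + r *\<^sub>R y) \<bullet> (A *v (d + r *\<^sub>R y))"
    by (rule psd[OF assms(1,2)], rule supp_add_sub[OF assms(3,4)])
  also have "\<dots> = 2*r*b + r^2 * a" unfolding q_add_scale[OF sym] assms(5) a_def b_def by simp
  finally have h: "0 \<le> 2 * r * b + r ^ 2 * a" .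
  have e: "(2 * r * b + r ^ 2 * a) * (a + 1) ^ 2 = - (b ^ 2 * (a + 2))"
    using alg_id[OF a0 r_def] .
  have "0 \<le> (2 * r * b + r ^ 2 * a) * (a + 1) ^ 2" using h by simp
  moreover have "b ^ 2 * (a + 2) > 0" using a0 b0 by simp
  ultimately show False using e by linarith
qed

lemma kernel_neg:
  fixes A :: "real^'n^'n"
  assumes "copositive A" "minimal_zero A u" "supp d \<subseteq> supp u"
    and q: "\<And>s. (u + s *\<^sub>R d) \<bullet> (A *v (u + s *\<^sub>R d)) = 0" and neg: "d$i0 < 0"
  shows "\<exists>c. d = c *\<^sub>R u"
proof (rule ccontr)
  assume nc: "\<not> (\<exists>c. d = c *\<^sub>R u)"
  have zu: "is_zero A u" and nm: "\<not> (\<exists>v. is_zero A v \<and> supp v \<subset> supp u)"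
    using assms(2) unfolding minimal_zero_def by auto
  have un: "nonneg_vec u" using zu unfolding is_zero_def by auto
  define N where "N = {i. d$i < 0}"
  define f where "f i = u$i / (- d$i)" for i
  define s where "s = Min (f ` N)"
  have Nne: "N \<noteq> {}" using neg N_def by auto
  have fN: "finite (f ` N)" by simp
  have upos: "u$i > 0" if "i \<in> N" for i
  proof -
    have "d$i \<noteq> 0" using that N_def by auto
    then have "u$i \<noteq> 0" using assms(3) unfolding supp_def by auto
    then show ?thesis using un unfolding nonneg_vec_def by (metis order_le_less)
  qed
  obtain j where j: "j \<in> N" "f j = s"
  proof -
    have "s \<in> f ` N" unfolding s_def using Min_in[OF fN] Nne by auto
    then show ?thesis using that by blast
  qed
  have spos: "s > 0" using j upos[of j] N_def f_def by (auto simp: divide_pos_neg)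
  have sle: "s \<le> f i" if "i \<in> N" for i unfolding s_def using that by (intro Min_le) auto
  define z where "z = u + s *\<^sub>R d"
  have znn: "nonneg_vec z" unfolding nonneg_vec_def z_def
  proof
    fix i
    show "0 \<le> (u + s *\<^sub>R d) $ i"
    proof (cases "i \<in> N")
      case True
      then have di: "d$i < 0" by (simp add: N_def)
      have "s * (- d$i) \<le> f i * (- d$i)" using sle[OF True] di by (intro mult_right_mono) auto
      also have "\<dots> = u$i" unfolding f_def using di by simp
      finally show ?thesis by simp
    next
      case False
      then have "d$i \<ge> 0" by (simp add: N_def)
      then show ?thesis using un spos unfolding nonneg_vec_def by (simp add: add_nonneg_nonneg)
    qed
  qed
  have zj: "z$j = 0"
  proof -
    have dj: "d$j < 0" using j(1) by (simp add: N_def)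
    have "z$j = u$j + f j * d$j" using j(2) by (simp add: z_def)
    also have "\<dots> = 0" unfolding f_def using dj by simp
    finally show ?thesis .
  qed
  have znz: "z \<noteq> 0"
  proof
    assume "z = 0"
    then have "d = (- 1 / s) *\<^sub>R u" using spos unfolding z_def
      by (simp add: vec_eq_iff field_simps) (metis add.commute add_eq_0_iff mult.commute)
    then show False using nc by blast
  qed
  have zsupp: "supp z \<subseteq> supp u" unfolding z_def
    by (rule supp_add_sub) (auto simp: assms(3))
  have "j \<in> supp u" using upos[OF j(1)] by (simp add: supp_def)
  moreover have "j \<notin> supp z" using zj by (simp add: supp_def)
  ultimately have "supp z \<subset> supp u" using zsupp by auto
  moreover have "is_zero A z" unfolding is_zero_def using znz znn q z_def by simp
  ultimately show False using nm by blast
qed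

lemma kernel:
  fixes A :: "real^'n^'n"
  assumes "copositive A" "minimal_zero A u" "supp d \<subseteq> supp u" "d \<bullet> (A *v d) = 0"
  shows "\<exists>c. d = c *\<^sub>R u"
proof -
  have sym: "transpose A = A" using assms(1) unfolding copositive_def by auto
  have zu: "is_zero A u" using assms(2) unfolding minimal_zero_def by auto
  have uq: "u \<bullet> (A *v u) = 0" using zu unfolding is_zero_def by auto
  have b: "d \<bullet> (A *v u) = 0" by (rule psd_kernel[OF assms(1) zu assms(3) order_refl assms(4)])
  then have b': "u \<bullet> (A *v d) = 0" using symm_b[OF sym] by metis
  have q: "(u + s *\<^sub>R d) \<bullet> (A *v (u + s *\<^sub>R d)) = 0" for s
    unfolding q_add_scale[OF sym] uq b' assms(4) by simp
  have sm: "supp (-d) \<subseteq> supp u" using assms(3) by (simp add: supp_def)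
  have q': "(u + s *\<^sub>R (-d)) \<bullet> (A *v (u + s *\<^sub>R (-d))) = 0" for s
    using q[of "-s"] by simp
  show ?thesis
  proof (cases "\<exists>i. d$i < 0")
    case True
    then obtain i where "d$i < 0" by blast
    then show ?thesis using kernel_neg[OF assms(1,2,3) q] by blast
  next
    case False
    show ?thesis
    proof (cases "\<exists>i. d$i > 0")
      case True
      then obtain i where "(-d)$i < 0" by auto
      then obtain c where "-d = c *\<^sub>R u" using kernel_neg[OF assms(1,2) sm q'] by blast
      then have "d = (-c) *\<^sub>R u" by (metis minus_minus scaleR_minus_left)
      then show ?thesis by blast
    next
      case False2: False
      then have "d = 0 *\<^sub>R u" using False by (simp add: vec_eq_iff) (metis linorder_neqE_linordered_idom)
      then show ?thesis by blast
    qed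
  qed
qed

lemma part1:
  fixes A :: "real^'n^'n" and u v w :: "real^'n" and k :: 'n
  assumes cop: "copositive A"
    and mu: "minimal_zero A u" and mv: "minimal_zero A v"
    and K: "supp v - supp u = {k}"
    and zw: "is_zero A w" and sw: "supp w \<subseteq> supp u \<union> supp v"
  shows "\<exists>\<alpha> \<beta>. \<alpha> \<ge> 0 \<and> \<beta> \<ge> 0 \<and> w = \<alpha> *\<^sub>R u + \<beta> *\<^sub>R v"
proof -
  have sym: "transpose A = A" and copx: "\<And>x. nonneg_vec x \<Longrightarrow> x \<bullet> (A *v x) \<ge> 0"
    using cop unfolding copositive_def by auto
  have zu: "is_zero A u" using mu unfolding minimal_zero_def by auto
  have zv: "is_zero A v" and nmv: "\<not> (\<exists>x. is_zero A x \<and> supp x \<subset> supp v)"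
    using mv unfolding minimal_zero_def by auto
  have un: "nonneg_vec u" and vn: "nonneg_vec v" and wn: "nonneg_vec w"
    and uq: "u \<bullet> (A *v u) = 0" and vq: "v \<bullet> (A *v v) = 0" and wq: "w \<bullet> (A *v w) = 0"
    and wnz: "w \<noteq> 0"
    using zu zv zw unfolding is_zero_def by auto
  have kv: "k \<in> supp v" and ku: "k \<notin> supp u" using K by auto
  have vk: "v$k > 0" using kv vn unfolding supp_def nonneg_vec_def by (metis mem_Collect_eq order_le_less)
  define t where "t = w$k / v$k"
  have t0: "t \<ge> 0" unfolding t_def using vk wn unfolding nonneg_vec_def by simp
  define w' where "w' = w + (-t) *\<^sub>R v"
  have sw': "supp w' \<subseteq> supp u"
  proof
    fix i assume i: "i \<in> supp w'"
    show "i \<in> supp u"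
    proof (rule ccontr)
      assume iu: "i \<notin> supp u"
      show False
      proof (cases "i = k")
        case True
        then have "w'$i = 0" unfolding w'_def t_def using vk by simp
        then show False using i by (simp add: supp_def)
      next
        case False
        then have "i \<notin> supp v" using K iu by auto
        moreover then have "i \<notin> supp w" using sw iu by auto
        ultimately have "w'$i = 0" unfolding w'_def supp_def by simp
        then show False using i by (simp add: supp_def)
      qed
    qed
  qed
  have bwv: "w \<bullet> (A *v v) \<ge> 0"
  proof -
    have "nonneg_vec (w + 1 *\<^sub>R v)" using wn vn unfolding nonneg_vec_def by simp
    then have "0 \<le> (w + 1 *\<^sub>R v) \<bullet> (A *v (w + 1 *\<^sub>R v))" by (rule copx)
    then show ?thesis unfolding q_add_scale[OF sym] wq vq by simp
  qed
  have "w' \<bullet> (A *v w') = - 2 * t * (w \<bullet> (A *v v))"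
    unfolding w'_def q_add_scale[OF sym] wq vq by simp
  moreover have "w' \<bullet> (A *v w') \<ge> 0" by (rule psd[OF cop zu sw'])
  moreover have "t * (w \<bullet> (A *v v)) \<ge> 0" using t0 bwv by simp
  ultimately have "w' \<bullet> (A *v w') = 0" by linarith
  then obtain c where c: "w' = c *\<^sub>R u" using kernel[OF cop mu sw'] by blast
  have wdec: "w = c *\<^sub>R u + t *\<^sub>R v" proof -
    have "w = w' + t *\<^sub>R v" unfolding w'_def by simp
    then show ?thesis using c by simp
  qed
  show ?thesis
  proof (cases "c \<ge> 0")
    case True then show ?thesis using wdec t0 by blast
  next
    case False
    have "supp u \<subseteq> supp v"
    proof
      fix i assume i: "i \<in> supp u"
      then have "u$i > 0" using un unfolding supp_def nonneg_vec_def by (metis mem_Collect_eq order_le_less)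
      then have "c * u$i < 0" using False by (simp add: mult_neg_pos)
      moreover have "w$i = c * u$i + t * v$i" using wdec by simp
      moreover have "w$i \<ge> 0" using wn unfolding nonneg_vec_def by simp
      ultimately have "t * v$i \<noteq> 0" by linarith
      then show "i \<in> supp v" by (simp add: supp_def)
    qed
    then have "supp u \<subset> supp v" using kv ku by auto
    then show ?thesis using nmv zu by blast
  qed
qed

theorem corollary3p13:
  fixes A :: "real^'n^'n" and u v :: "real^'n" and k :: 'n
  assumes "copositive A"
    and "minimal_zero A u" and "minimal_zero A v"
    and "supp v - supp u = {k}"
  shows "(\<forall>w. is_zero A w \<and> supp w \<subseteq> supp u \<union> supp v \<longrightarrow>
            (\<exists>\<alpha> \<beta>. \<alpha> \<ge> 0 \<and> \<beta> \<ge> 0 \<and> w = \<alpha> *\<^sub>R u + \<beta> *\<^sub>R v))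
       \<and> (\<forall>w. minimal_zero A w \<and> supp w \<subseteq> supp u \<union> supp v \<longrightarrow>
            (\<exists>c>0. w = c *\<^sub>R u \<or> w = c *\<^sub>R v))"
proof (intro conjI allI impI)
  fix w assume "is_zero A w \<and> supp w \<subseteq> supp u \<union> supp v"
  then show "\<exists>\<alpha> \<beta>. \<alpha> \<ge> 0 \<and> \<beta> \<ge> 0 \<and> w = \<alpha> *\<^sub>R u + \<beta> *\<^sub>R v"
    using part1[OF assms] by blast
next
  fix w assume h: "minimal_zero A w \<and> supp w \<subseteq> supp u \<union> supp v"
  have zw: "is_zero A w" and nmw: "\<not> (\<exists>x. is_zero A x \<and> supp x \<subset> supp w)"
    using h unfolding minimal_zero_def by auto
  have zu: "is_zero A u" using assms(2) unfolding minimal_zero_def by auto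
  have un: "nonneg_vec u" and vn: "nonneg_vec v" using assms(2,3) unfolding minimal_zero_def is_zero_def by auto
  obtain a b where ab: "a \<ge> 0" "b \<ge> 0" "w = a *\<^sub>R u + b *\<^sub>R v"
    using part1[OF assms zw] h by blast
  have wnz: "w \<noteq> 0" using zw unfolding is_zero_def by auto
  show "\<exists>c>0. w = c *\<^sub>R u \<or> w = c *\<^sub>R v"
  proof (cases "a = 0")
    case True
    then have "b \<noteq> 0" using ab wnz by auto
    then have "b > 0" "w = b *\<^sub>R v" using True ab by auto
    then show ?thesis by blast
  next
    case a: False
    show ?thesis
    proof (cases "b = 0")
      case True
      then have "a > 0" "w = a *\<^sub>R u" using a ab by auto
      then show ?thesis by blast
    next
      case False
      have "supp u \<union> supp v \<subseteq> supp w"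
      proof
        fix i assume "i \<in> supp u \<union> supp v"
        then have "u$i > 0 \<or> v$i > 0" using un vn unfolding supp_def nonneg_vec_def
          by (metis Un_iff mem_Collect_eq order_le_less)
        moreover have "u$i \<ge> 0" "v$i \<ge> 0" using un vn unfolding nonneg_vec_def by auto
        moreover have "a > 0" "b > 0" using a False ab(1,2) by auto
        ultimately have "a * u$i + b * v$i > 0"
          by (metis add_nonneg_pos add_pos_nonneg mult_nonneg_nonneg mult_pos_pos order_less_imp_le)
        then show "i \<in> supp w" using ab(3) by (simp add: supp_def)
      qed
      then have "supp u \<subset> supp w" using assms(4) by auto
      then show ?thesis using nmw zu by blast
    qed
  qed
qed

end
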